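(* Let $A$ be the adjacency matrix of an $n$-cell regular network with valency $v$, let $G=\operatorname{Ker}(A-vI)$ be the eigenspace associated with $v$, assume $\dim G>1$, and let $E$ be a direct complement to $F$ in $G$ (so $G=F\oplus E$). Then: (1) for every special Jordan subspace $J\neq F$ to the network contained in $G$, there is a one-dimensional subspace $J'\subseteq E$ which is special in $E$ such that $P(J)=P(J')$ and $F\oplus J=F\oplus J'$; (2) a one-dimensional subspace of $E$ is a special Jordan subspace to the network if and only if it is special in $E$; (3) if $S=F\oplus J_1\oplus\cdots\oplus J_k$ is a direct sum of one-dimensional special Jordan subspaces to the network contained in $G$, then there are one-dimensional subspaces $J_1',\dots,J_k'$ of $E$, each special in $E$, such that $S=F\oplus J_1'\oplus\cdots\oplus J_k'$.
   Context: A regular network is a finite directed graph on cells $1,\dots,n$ (loops and multiple arrows allowed) in which every cell receives the same number $v$ of arrows, called the valency. Its adjacency matrix $A=[a_{ij}]$ has $a_{ij}$ equal to the number of arrows cell $i$ receives from cell $j$; every row sum of $A$ equals $v$. $A$ acts on $\mathbb{C}^n$. (It is known that $v$ is a semisimple eigenvalue of $A$ and $(1,\dots,1)$ is an eigenvector for $v$.) A polydiagonal is a subspace of $\mathbb{C}^n$ of the form $\{x : x_i=x_j \text{ for all } (i,j)\in R\}$ for some (possibly empty) set $R$ of index pairs. $F=\{x_1=\cdots=x_n\}$ is the fully synchrony subspace. $P(W)$ is the smallest polydiagonal containing a subspace $W$. For a subspace $E\subseteq\mathbb{C}^n$, a subspace $W\subseteq E$ is special in $E$ if for every subspace $U\subseteq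 E$ with $\dim U=\dim W$ and $P(U)\subseteq P(W)$ one has $P(U)=P(W)$. For an eigenvalue $\lambda$ of $A$, the generalized eigenspace is $G_\lambda=\operatorname{Ker}(A-\lambda I)^p$ for $p$ large. A Jordan chain of length $k$ for $\lambda$ is a sequence of nonzero vectors $x_1,\dots,x_k$ with $(A-\lambda I)x_1=0$ and $(A-\lambda I)x_i=x_{i-1}$ for $2\le i\le k$; a Jordan subspace is the ($k$-dimensional) span of a Jordan chain. A Jordan subspace $W$ of a generalized eigenspace $G$ is a special Jordan subspace to the network if for every Jordan subspace $U$ of $G$ with $\dim U=\dim W$ and $P(U)\subseteq P(W)$, either $P(U)=P(W)$ or $U=F$. *)

theory Defs
  imports "HOL-Analysis.Analysis"
begin

text \<open>The network is given by its
adjacency matrix with natural-number entries; a x A$i$j is the number of arrows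
cell i receives from cell j.  Vectors live in complex^'n, a vector space over
the complex numbers via the scalar multiplication (*s); linear-algebra notions
(subspace, span, dim) are those of the interpretation vec.\<close>

definition regular_network :: "nat^'n^'n \<Rightarrow> nat \<Rightarrow> bool" where
  "regular_network Adj v \<longleftrightarrow> (\<forall>i. (\<Sum>j\<in>UNIV. Adj$i$j) = v)"

definition cmat :: "nat^'n^'n \<Rightarrow> complex^'n^'n" where
  "cmat Adj = (\<chi> i j. of_nat (Adj$i$j))"

definition polydiagonal :: "(complex^'n) set \<Rightarrow> bool" where
  "polydiagonal D \<longleftrightarrow> (\<exists>R :: ('n \<times> 'n) set. D = {x. \<forall>(i,j)\<in>R. x$i = x$j})"

definition full_sync :: "(complex^'n) set" where
  "full_sync = {x. \<forall>i j. x$i = x$j}"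

text \<open>Smallest polydiagonal containing W (polydiagonals are closed under
intersection, so this intersection is itself a polydiagonal).\<close>
definition poly_closure :: "(complex^'n) set \<Rightarrow> (complex^'n) set" where
  "poly_closure W = \<Inter>{D. polydiagonal D \<and> W \<subseteq> D}"

definition special_in :: "(complex^'n) set \<Rightarrow> (complex^'n) set \<Rightarrow> bool" where
  "special_in E W \<longleftrightarrow> vec.subspace W \<and> W \<subseteq> E \<and>
     (\<forall>U. vec.subspace U \<and> U \<subseteq> E \<and> vec.dim U = vec.dim W \<and>
          poly_closure U \<subseteq> poly_closure W \<longrightarrow> poly_closure U = poly_closure W)"

definition shifted :: "complex^'n^'n \<Rightarrow> complex \<Rightarrow> complex^'n \<Rightarrow> complex^'n" where
  "shifted A lam x = A *v x - lam *s x"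

definition gen_eigenspace :: "complex^'n^'n \<Rightarrow> complex \<Rightarrow> (complex^'n) set" where
  "gen_eigenspace A lam = {x. \<exists>p. (shifted A lam ^^ p) x = 0}"

text \<open>Jordan chain x_1,...,x_k (list index 0 is x_1).\<close>
definition jordan_chain :: "complex^'n^'n \<Rightarrow> complex \<Rightarrow> (complex^'n) list \<Rightarrow> bool" where
  "jordan_chain A lam xs \<longleftrightarrow> xs \<noteq> [] \<and> (\<forall>x\<in>set xs. x \<noteq> 0) \<and>
     shifted A lam (xs!0) = 0 \<and>
     (\<forall>i. 0 < i \<and> i < length xs \<longrightarrow> shifted A lam (xs!i) = xs!(i-1))"

definition jordan_subspace :: "complex^'n^'n \<Rightarrow> complex \<Rightarrow> (complex^'n) set \<Rightarrow> bool" where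
  "jordan_subspace A lam W \<longleftrightarrow> (\<exists>xs. jordan_chain A lam xs \<and> W = vec.span (set xs))"

definition special_jordan :: "complex^'n^'n \<Rightarrow> complex \<Rightarrow> (complex^'n) set \<Rightarrow> bool" where
  "special_jordan A lam W \<longleftrightarrow> jordan_subspace A lam W \<and>
     (\<forall>U. jordan_subspace A lam U \<and> vec.dim U = vec.dim W \<and>
          poly_closure U \<subseteq> poly_closure W \<longrightarrow>
          poly_closure U = poly_closure W \<or> U = full_sync)"

primrec list_sum :: "(complex^'n) set list \<Rightarrow> (complex^'n) set" where
  "list_sum [] = {0}"
| "list_sum (V # Vs) = {x + y | x y. x \<in> V \<and> y \<in> list_sum Vs}"

definition direct_sum :: "(complex^'n) set list \<Rightarrow> bool" where
  "direct_sum Vs \<longleftrightarrow> (\<forall>xs ys. length xs = length Vs \<and> length ys = length Vs \<and>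
      (\<forall>i<length Vs. xs!i \<in> Vs!i \<and> ys!i \<in> Vs!i) \<and> sum_list xs = sum_list ys \<longrightarrow> xs = ys)"

end

theory Submission imports Defs begin
lemma polydiag_subspace: "polydiagonal D \<Longrightarrow> vec.subspace D"
  unfolding polydiagonal_def vec.subspace_def by (auto split: prod.splits)
lemma polydiag_F: "polydiagonal D \<Longrightarrow> full_sync \<subseteq> D"
  unfolding polydiagonal_def full_sync_def by auto
lemma F_subspace: "vec.subspace full_sync"
  unfolding full_sync_def vec.subspace_def by (auto, metis)
lemma shifted_scale: "shifted A lam (c *s x) = c *s shifted A lam x"
  by (simp add: shifted_def vec_eq_iff matrix_vector_mult_def sum_distrib_left algebra_simps)
lemma span1: "x \<noteq> 0 \<Longrightarrow> vec.dim (vec.span {x}) = 1" by simp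

lemma pc_shift:
  fixes f e :: "complex^'n"
  assumes f: "f \<in> full_sync"
  shows "poly_closure (vec.span {f + e}) = poly_closure (vec.span {e})"
proof -
  have "\<And>D. polydiagonal D \<Longrightarrow> (vec.span {f+e} \<subseteq> D) = (vec.span {e} \<subseteq> D)"
  proof -
    fix D :: "(complex^'n) set" assume D: "polydiagonal D"
    have s: "vec.subspace D" and fD: "f \<in> D" using polydiag_subspace polydiag_F D f by auto
    have 1: "(vec.span {f+e} \<subseteq> D) = (f + e \<in> D)"
      using vec.span_minimal[of "{f+e}" D] s vec.span_superset[of "{f+e}"] by auto
    have 2: "(vec.span {e} \<subseteq> D) = (e \<in> D)"
      using vec.span_minimal[of "{e}" D] s vec.span_superset[of "{e}"] by auto
    have "(f+e \<in> D) = (e \<in> D)" using s fD vec.subspace_add vec.subspace_diff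
      by (metis add_diff_cancel_left')
    thus "(vec.span {f+e} \<subseteq> D) = (vec.span {e} \<subseteq> D)" using 1 2 by simp
  qed
  hence "{D. polydiagonal D \<and> vec.span {f+e} \<subseteq> D} = {D. polydiagonal D \<and> vec.span {e} \<subseteq> D}"
    by blast
  thus ?thesis unfolding poly_closure_def by simp
qed

lemma dim1:
  assumes "vec.subspace U" "vec.dim U = 1"
  shows "\<exists>u. u \<noteq> 0 \<and> U = vec.span {u}"
proof -
  obtain B where B: "B \<subseteq> U" "vec.independent B" "U \<subseteq> vec.span B" "card B = vec.dim U"
    using vec.basis_exists by blast
  then obtain u where u: "B = {u}" using assms(2) card_1_singletonE by metis
  have "u \<noteq> 0" using B(2) u by simp
  moreover have "U = vec.span {u}"
    using B u vec.span_minimal[of B U] assms(1) by auto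
  ultimately show ?thesis by blast
qed

lemma F_span:
  fixes u :: "complex^'n"
  assumes "u \<in> full_sync" "u \<noteq> 0"
  shows "vec.span {u} = full_sync"
proof
  show "vec.span {u} \<subseteq> full_sync" using vec.span_minimal[of "{u}"] F_subspace assms by auto
  show "full_sync \<subseteq> vec.span {u}"
  proof
    fix x :: "complex^'n" assume x: "x \<in> full_sync"
    obtain i where i: "u$i \<noteq> 0" using assms(2) by (metis vec_eq_iff zero_index)
    have "x = (x$i / u$i) *s u"
    proof (subst vec_eq_iff, rule allI)
      fix j
      have "u$j = u$i" "x$j = x$i" using x assms(1) unfolding full_sync_def by auto
      thus "x$j = ((x$i / u$i) *s u)$j" using i by simp
    qed
    thus "x \<in> vec.span {u}" unfolding vec.span_singleton by blast
  qed
qed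

lemma eig_jordan:
  assumes "shifted A lam u = 0" "u \<noteq> 0"
  shows "jordan_subspace A lam (vec.span {u})"
  unfolding jordan_subspace_def jordan_chain_def
  by (rule exI[of _ "[u]"]) (use assms in auto)

lemma jordan_dim1:
  assumes "jordan_subspace A lam U" "vec.dim U = 1"
  shows "\<exists>u. u \<noteq> 0 \<and> shifted A lam u = 0 \<and> U = vec.span {u}"
proof -
  obtain xs where xs: "jordan_chain A lam xs" "U = vec.span (set xs)"
    using assms(1) unfolding jordan_subspace_def by blast
  obtain w where w: "w \<noteq> 0" "U = vec.span {w}" using dim1 assms(2) xs(2) by (metis vec.subspace_span)
  have len: "length xs = 1"
  proof (rule ccontr)
    assume "length xs \<noteq> 1"
    moreover have "length xs \<noteq> 0" using xs(1) unfolding jordan_chain_def by auto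
    ultimately have l: "length xs \<ge> 2" by linarith
    have "xs!0 \<in> U" "xs!1 \<in> U" using l xs(2) by (auto intro!: vec.span_base nth_mem)
    then obtain a b where ab: "xs!0 = a *s w" "xs!1 = b *s w" using w(2) unfolding vec.span_singleton by blast
    have nz: "xs!0 \<noteq> 0" using xs(1) l unfolding jordan_chain_def by (auto)
    hence "a \<noteq> 0" using ab by auto
    hence "xs!1 = (b / a) *s (xs!0)" using ab by (simp add: vec_eq_iff)
    hence "shifted A lam (xs!1) = 0" using xs(1) shifted_scale unfolding jordan_chain_def by (metis vec.scale_zero_right)
    moreover have "shifted A lam (xs!1) = xs!0" using xs(1) l unfolding jordan_chain_def by auto
    ultimately show False using nz by simp
  qed
  then obtain x where "xs = [x]" by (cases xs) auto
  thus ?thesis using xs unfolding jordan_chain_def by auto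
qed

lemma jordan_inG:
  assumes "jordan_subspace A lam U" "U \<subseteq> {x. shifted A lam x = 0}"
  shows "\<exists>u. u \<noteq> 0 \<and> shifted A lam u = 0 \<and> U = vec.span {u}"
proof -
  obtain xs where xs: "jordan_chain A lam xs" "U = vec.span (set xs)"
    using assms(1) unfolding jordan_subspace_def by blast
  have len: "length xs = 1"
  proof (rule ccontr)
    assume "length xs \<noteq> 1"
    moreover have "length xs \<noteq> 0" using xs(1) unfolding jordan_chain_def by auto
    ultimately have l: "length xs \<ge> 2" by linarith
    have "xs!1 \<in> U" using l xs(2) by (auto intro!: vec.span_base)
    hence "shifted A lam (xs!1) = 0" using assms(2) by auto
    moreover have nz: "xs!0 \<noteq> 0" using xs(1) l unfolding jordan_chain_def by (auto)
    moreover have "shifted A lam (xs!1) = xs!0" using xs(1) l unfolding jordan_chain_def by auto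
    ultimately show False by simp
  qed
  then obtain x where "xs = [x]" by (cases xs) auto
  thus ?thesis using xs unfolding jordan_chain_def by auto
qed

definition Rel :: "(complex^'n) set \<Rightarrow> (complex^'n) set \<Rightarrow> bool" where
  "Rel J J' \<longleftrightarrow> vec.subspace J \<and> vec.subspace J' \<and> (\<forall>w\<in>J. \<exists>z\<in>J'. w - z \<in> full_sync)
     \<and> (\<forall>z\<in>J'. \<exists>w\<in>J. z - w \<in> full_sync) \<and> J' \<inter> full_sync = {0}"

lemma LS_step:
  assumes "list_all2 (\<lambda>J J'. \<forall>w\<in>J. \<exists>z\<in>J'. w - z \<in> full_sync) Js Js'"
  shows "x \<in> list_sum Js \<Longrightarrow> \<exists>y\<in>list_sum Js'. x - y \<in> full_sync"
  using assms
proof (induction Js Js' arbitrary: x rule: list_all2_induct)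
  case Nil
  then show ?case using F_subspace vec.subspace_0 by auto
next
  case (Cons J Js J' Js')
  obtain a b where ab: "x = a + b" "a \<in> J" "b \<in> list_sum Js" using Cons.prems by auto
  obtain z where z: "z \<in> J'" "a - z \<in> full_sync" using Cons.hyps(1) ab(2) by blast
  obtain y where y: "y \<in> list_sum Js'" "b - y \<in> full_sync" using Cons.IH ab(3) by blast
  have "z + y \<in> list_sum (J' # Js')" using z y by auto
  moreover have "x - (z + y) = (a - z) + (b - y)" using ab by (simp add: algebra_simps)
  hence "x - (z + y) \<in> full_sync" using z y F_subspace vec.subspace_add by metis
  ultimately show ?case by blast
qed

lemma LS_sub:
  assumes "list_all2 (\<lambda>J J'. \<forall>w\<in>J. \<exists>z\<in>J'. w - z \<in> full_sync) Js Js'"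
  shows "list_sum (full_sync # Js) \<subseteq> list_sum (full_sync # Js')"
proof
  fix t assume "t \<in> list_sum (full_sync # Js)"
  then obtain f x where fx: "t = f + x" "f \<in> full_sync" "x \<in> list_sum Js" by auto
  obtain y where y: "y \<in> list_sum Js'" "x - y \<in> full_sync" using LS_step[OF assms fx(3)] by blast
  have "f + (x - y) \<in> full_sync" using fx y F_subspace vec.subspace_add by metis
  moreover have "t = (f + (x - y)) + y" using fx by simp
  ultimately have "t \<in> {a + b | a b. a \<in> full_sync \<and> b \<in> list_sum Js'}" using y by blast
  thus "t \<in> list_sum (full_sync # Js')" by simp
qed

lemma LS_eq:
  assumes "list_all2 Rel Js Js'"
  shows "list_sum (full_sync # Js) = list_sum (full_sync # Js')"
proof
  show "list_sum (full_sync # Js) \<subseteq> list_sum (full_sync # Js')"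
    by (rule LS_sub) (use assms in \<open>auto simp: list_all2_conv_all_nth Rel_def\<close>)
  show "list_sum (full_sync # Js') \<subseteq> list_sum (full_sync # Js)"
    by (rule LS_sub) (use assms in \<open>auto simp: list_all2_conv_all_nth Rel_def\<close>)
qed

lemma sum_map2: "length xs = length ys \<Longrightarrow>
   sum_list (map2 (-) xs ys) = sum_list xs - sum_list (ys :: 'a::ab_group_add list)"
proof (induction xs arbitrary: ys)
  case Nil thus ?case by simp
next
  case (Cons x xs) thus ?case by (cases ys) (auto simp: algebra_simps)
qed

lemma sum_in_sub: "vec.subspace S \<Longrightarrow> (\<forall>x\<in>set xs. x \<in> S) \<Longrightarrow> sum_list xs \<in> S"
  by (induction xs) (auto intro: vec.subspace_0 vec.subspace_add)

lemma sum_zero: "(\<forall>x\<in>set xs. x = 0) \<Longrightarrow> sum_list xs = (0::'a::monoid_add)"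
  by (induction xs) auto

lemma sum_upd: "i < length xs \<Longrightarrow> (\<forall>x\<in>set xs. x = 0) \<Longrightarrow> sum_list (xs[i:=y]) = (y::'a::monoid_add)"
proof (induction xs arbitrary: i)
  case Nil thus ?case by simp
next
  case (Cons a xs) thus ?case by (cases i) (auto simp: sum_zero)
qed

lemma DS_zero:
  assumes "direct_sum Vs" "\<forall>i<length Vs. 0 \<in> Vs!i" "length zs = length Vs"
    "\<forall>i<length Vs. zs!i \<in> Vs!i" "sum_list zs = 0"
  shows "\<forall>i<length Vs. zs!i = 0"
proof -
  let ?ys = "replicate (length Vs) 0"
  have "sum_list ?ys = 0" by (rule sum_zero) auto
  hence "zs = ?ys" using assms unfolding direct_sum_def by (metis length_replicate nth_replicate)
  thus ?thesis by simp
qed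

lemma DS_intro:
  assumes "\<forall>i<length Vs. vec.subspace (Vs!i)"
    "\<And>zs. length zs = length Vs \<Longrightarrow> \<forall>i<length Vs. zs!i \<in> Vs!i \<Longrightarrow> sum_list zs = 0 \<Longrightarrow> \<forall>i<length Vs. zs!i = 0"
  shows "direct_sum Vs"
  unfolding direct_sum_def
proof (intro allI impI)
  fix xs ys assume h: "length xs = length Vs \<and> length ys = length Vs \<and>
      (\<forall>i<length Vs. xs!i \<in> Vs!i \<and> ys!i \<in> Vs!i) \<and> sum_list xs = sum_list ys"
  let ?zs = "map2 (-) xs ys"
  have l: "length ?zs = length Vs" using h by simp
  have m: "\<forall>i<length Vs. ?zs!i \<in> Vs!i" using h assms(1) by (auto intro: vec.subspace_diff)
  have s: "sum_list ?zs = 0" using h sum_map2[of xs ys] by simp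
  have "\<forall>i<length Vs. ?zs!i = 0" using assms(2)[OF l m s] .
  hence "\<forall>i<length Vs. xs!i = ys!i" using h by auto
  thus "xs = ys" using h by (auto intro: nth_equalityI)
qed

lemma DS_main:
  assumes rel: "list_all2 Rel Js Js'" and ds: "direct_sum (full_sync # Js)"
  shows "direct_sum (full_sync # Js')"
proof -
  define k where "k = length Js"
  have lk: "length Js' = k" using rel k_def list_all2_lengthD by metis
  have R: "\<forall>i<k. Rel (Js!i) (Js'!i)" using rel lk k_def by (auto simp: list_all2_conv_all_nth)
  show ?thesis
  proof (rule DS_intro)
    show "\<forall>i<length (full_sync # Js'). vec.subspace ((full_sync # Js') ! i)"
      using R lk F_subspace by (auto simp: All_less_Suc2 Rel_def)
  next
    fix zs assume len: "length zs = length (full_sync # Js')"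
      and mem: "\<forall>i<length (full_sync # Js'). zs ! i \<in> (full_sync # Js') ! i"
      and s0: "sum_list zs = 0"
    obtain z0 zr where zs: "zs = z0 # zr" using len by (cases zs) auto
    have lzr: "length zr = k" using len zs lk by simp
    have z0: "z0 \<in> full_sync" and zr: "\<forall>i<k. zr!i \<in> Js'!i"
      using mem zs lk by (auto simp: All_less_Suc2)
    define wr where "wr = map (\<lambda>i. SOME w. w \<in> Js!i \<and> zr!i - w \<in> full_sync) [0..<k]"
    have lwr: "length wr = k" unfolding wr_def by simp
    have wr: "\<forall>i<k. wr!i \<in> Js!i \<and> zr!i - wr!i \<in> full_sync"
    proof (intro allI impI)
      fix i assume i: "i < k"
      have "\<exists>w. w \<in> Js!i \<and> zr!i - w \<in> full_sync" using R i zr unfolding Rel_def by blast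
      from someI_ex[OF this] show "wr!i \<in> Js!i \<and> zr!i - wr!i \<in> full_sync"
        unfolding wr_def using i by simp
    qed
    define w0 where "w0 = z0 + (sum_list zr - sum_list wr)"
    have "sum_list zr - sum_list wr = sum_list (map2 (-) zr wr)"
      using sum_map2[of zr wr] lzr lwr by simp
    moreover have "sum_list (map2 (-) zr wr) \<in> full_sync"
    proof (rule sum_in_sub[OF F_subspace], rule ballI)
      fix x assume "x \<in> set (map2 (-) zr wr)"
      then obtain i where "i < k" "x = zr!i - wr!i" using lzr lwr by (auto simp: in_set_conv_nth)
      thus "x \<in> full_sync" using wr by auto
    qed
    ultimately have w0F: "w0 \<in> full_sync" unfolding w0_def using z0 F_subspace vec.subspace_add by metis
    have "sum_list (w0 # wr) = sum_list zs" unfolding w0_def zs by simp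
    hence sw: "sum_list (w0 # wr) = 0" using s0 by simp
    have "\<forall>i<length (full_sync # Js). (w0 # wr)!i = 0"
    proof (rule DS_zero[OF ds])
      show "\<forall>i<length (full_sync # Js). 0 \<in> (full_sync # Js) ! i"
        using R k_def F_subspace by (auto simp: All_less_Suc2 Rel_def intro: vec.subspace_0)
      show "length (w0 # wr) = length (full_sync # Js)" using lwr k_def by simp
      show "\<forall>i<length (full_sync # Js). (w0 # wr) ! i \<in> (full_sync # Js) ! i"
        using w0F wr k_def by (auto simp: All_less_Suc2)
      show "sum_list (w0 # wr) = 0" by (rule sw)
    qed
    hence w00: "w0 = 0" and wr0: "\<forall>i<k. wr!i = 0" using k_def by (auto simp: All_less_Suc2)
    have zr0: "\<forall>i<k. zr!i = 0"
    proof (intro allI impI)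
      fix i assume i: "i < k"
      have "zr!i \<in> full_sync" "zr!i \<in> Js'!i" using wr wr0 zr i by auto
      thus "zr!i = 0" using R i unfolding Rel_def by blast
    qed
    have "sum_list zr = 0" using zr0 lzr by (intro sum_zero) (auto simp: in_set_conv_nth)
    moreover have "sum_list wr = 0" using wr0 lwr by (intro sum_zero) (auto simp: in_set_conv_nth)
    ultimately have "z0 = 0" using w00 unfolding w0_def by simp
    thus "\<forall>i<length (full_sync # Js'). zs ! i = 0" using zs zr0 lzr lk by (auto simp: All_less_Suc2)
  qed
qed

lemma rel_shift:
  assumes f: "f \<in> full_sync" and EF: "full_sync \<inter> E = {0}" "vec.subspace E" and e: "e \<in> E"
  shows "Rel (vec.span {f + e}) (vec.span {e})"
  unfolding Rel_def
proof (intro conjI ballI)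
  show "vec.subspace (vec.span {f + e})" "vec.subspace (vec.span {e})" by auto
  fix w assume "w \<in> vec.span {f + e}"
  then obtain c where c: "w = c *s (f + e)" unfolding vec.span_singleton by blast
  have "c *s e \<in> vec.span {e}" unfolding vec.span_singleton by blast
  moreover have "w - c *s e = c *s f" using c by (simp add: vec.scale_right_distrib)
  hence "w - c *s e \<in> full_sync" using f F_subspace vec.subspace_scale by metis
  ultimately show "\<exists>z\<in>vec.span {e}. w - z \<in> full_sync" by blast
next
  fix z assume "z \<in> vec.span {e}"
  then obtain c where c: "z = c *s e" unfolding vec.span_singleton by blast
  have "c *s (f + e) \<in> vec.span {f + e}" unfolding vec.span_singleton by blast
  moreover have "z - c *s (f + e) = - (c *s f)" using c by (simp add: vec.scale_right_distrib)
  hence "z - c *s (f + e) \<in> full_sync" using f F_subspace vec.subspace_scale vec.subspace_neg by metis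
  ultimately show "\<exists>w\<in>vec.span {f + e}. z - w \<in> full_sync" by blast
next
  have "vec.span {e} \<subseteq> E" using vec.span_minimal[of "{e}" E] e EF by auto
  thus "vec.span {e} \<inter> full_sync = {0}" using EF vec.span_zero by auto
qed

locale ctx =
  fixes A :: "complex^'n^'n" and lam :: complex and G E :: "(complex^'n) set"
  assumes G_def: "G = {x. A *v x = lam *s x}"
    and E_sub: "vec.subspace E" and E_G: "E \<subseteq> G"
    and compl1: "full_sync \<inter> E = {0}" and compl2: "list_sum [full_sync, E] = G"
begin

lemma Gsh: "G = {x. shifted A lam x = 0}" unfolding G_def shifted_def by auto

lemma decomp: "u \<in> G \<Longrightarrow> \<exists>f e. f \<in> full_sync \<and> e \<in> E \<and> u = f + e"
  using compl2 by auto

lemma inE_notF: "w \<in> E \<Longrightarrow> w \<noteq> 0 \<Longrightarrow> vec.span {w} \<noteq> full_sync"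
  using compl1 vec.span_base[of w "{w}"] by auto

lemma specE_of_J:
  assumes SJ: "special_jordan A lam J" and dJ: "vec.dim J = 1" and W: "vec.subspace W" "W \<subseteq> E"
    and dW: "vec.dim W = 1" and pc: "poly_closure W = poly_closure J"
  shows "special_in E W"
  unfolding special_in_def
proof (intro conjI allI impI)
  show "vec.subspace W" "W \<subseteq> E" by (rule W(1), rule W(2))
  fix U assume U: "vec.subspace U \<and> U \<subseteq> E \<and> vec.dim U = vec.dim W \<and> poly_closure U \<subseteq> poly_closure W"
  obtain w where w: "w \<noteq> 0" "U = vec.span {w}" using dim1 U dW by metis
  have wE: "w \<in> E" using U w vec.span_base[of w "{w}"] by auto
  hence "shifted A lam w = 0" using E_G Gsh by auto
  hence "jordan_subspace A lam U" using eig_jordan w by metis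
  hence "poly_closure U = poly_closure J \<or> U = full_sync"
    using SJ U dJ dW pc unfolding special_jordan_def by auto
  thus "poly_closure U = poly_closure W" using inE_notF[OF wE w(1)] w pc by auto
qed

lemma part2:
  assumes W: "vec.subspace W" "W \<subseteq> E" "vec.dim W = 1"
  shows "special_jordan A lam W \<longleftrightarrow> special_in E W"
proof
  assume "special_jordan A lam W"
  thus "special_in E W" using specE_of_J W by blast
next
  assume SI: "special_in E W"
  obtain w where w: "w \<noteq> 0" "W = vec.span {w}" using dim1 W by metis
  have "w \<in> E" using W w vec.span_base[of w "{w}"] by auto
  hence "shifted A lam w = 0" using E_G Gsh by auto
  hence JW: "jordan_subspace A lam W" using eig_jordan w by metis
  show "special_jordan A lam W"
    unfolding special_jordan_def
  proof (intro conjI allI impI)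
    show "jordan_subspace A lam W" by (rule JW)
    fix U assume U: "jordan_subspace A lam U \<and> vec.dim U = vec.dim W \<and> poly_closure U \<subseteq> poly_closure W"
    obtain u where u: "u \<noteq> 0" "shifted A lam u = 0" "U = vec.span {u}"
      using jordan_dim1 U W(3) by metis
    have "u \<in> G" using u Gsh by auto
    then obtain f e where fe: "f \<in> full_sync" "e \<in> E" "u = f + e" using decomp by blast
    show "poly_closure U = poly_closure W \<or> U = full_sync"
    proof (cases "e = 0")
      case True
      thus ?thesis using F_span[of u] fe u by simp
    next
      case False
      have pe: "poly_closure (vec.span {e}) = poly_closure U" using pc_shift fe u by metis
      have "vec.subspace (vec.span {e})" by simp
      moreover have "vec.span {e} \<subseteq> E" using vec.span_minimal[of "{e}" E] fe E_sub by auto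
      moreover have "vec.dim (vec.span {e}) = vec.dim W" using False W(3) by simp
      moreover have "poly_closure (vec.span {e}) \<subseteq> poly_closure W" using pe U by simp
      ultimately have "poly_closure (vec.span {e}) = poly_closure W"
        using SI unfolding special_in_def by blast
      thus ?thesis using pe by simp
    qed
  qed
qed

lemma core1:
  assumes SJ: "special_jordan A lam J" and nF: "J \<noteq> full_sync" and JG: "J \<subseteq> G"
  shows "\<exists>f e. f \<in> full_sync \<and> e \<in> E \<and> e \<noteq> 0 \<and> J = vec.span {f + e} \<and> vec.dim J = 1
     \<and> special_in E (vec.span {e}) \<and> Rel J (vec.span {e})"
proof -
  obtain u where u: "u \<noteq> 0" "shifted A lam u = 0" "J = vec.span {u}"
    using jordan_inG[of A lam J] SJ JG Gsh unfolding special_jordan_def by auto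
  have dJ: "vec.dim J = 1" using u by simp
  have "u \<in> G" using u Gsh by auto
  then obtain f e where fe: "f \<in> full_sync" "e \<in> E" "u = f + e" using decomp by blast
  have e0: "e \<noteq> 0" using F_span[of u] fe u nF by auto
  have pe: "poly_closure (vec.span {e}) = poly_closure J" using pc_shift fe u by metis
  have "vec.span {e} \<subseteq> E" using vec.span_minimal[of "{e}" E] fe E_sub by auto
  hence "special_in E (vec.span {e})"
    using specE_of_J[OF SJ dJ _ _ _ pe] e0 by simp
  moreover have "Rel J (vec.span {e})" using rel_shift[OF fe(1) compl1 E_sub fe(2)] u fe by simp
  ultimately show ?thesis using fe e0 u dJ by blast
qed
end

lemma notF_ds:
  assumes ds: "direct_sum (full_sync # Js)" and sub: "\<forall>J\<in>set Js. vec.subspace J"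
    and J: "J \<in> set Js"
  shows "J \<noteq> full_sync"
proof
  assume JF: "J = full_sync"
  obtain i where i: "i < length Js" "Js!i = J" using J by (auto simp: in_set_conv_nth)
  define one :: "complex^'a" where "one = (\<chi> j. 1)"
  have oneF: "one \<in> full_sync" unfolding one_def full_sync_def by simp
  have one0: "one \<noteq> 0" unfolding one_def by (simp add: vec_eq_iff)
  define zs where "zs = one # (replicate (length Js) 0)[i := - one]"
  have "\<forall>k<length (full_sync # Js). zs!k = 0"
  proof (rule DS_zero[OF ds])
    show "\<forall>k<length (full_sync # Js). 0 \<in> (full_sync # Js) ! k"
      using sub F_subspace by (auto simp: All_less_Suc2 intro: vec.subspace_0)
    show "length zs = length (full_sync # Js)" unfolding zs_def by simp
    show "\<forall>k<length (full_sync # Js). zs ! k \<in> (full_sync # Js) ! k"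
      using sub oneF i JF F_subspace
      by (auto simp: All_less_Suc2 zs_def nth_list_update intro: vec.subspace_0 vec.subspace_neg)
    show "sum_list zs = 0" unfolding zs_def using i by (simp add: sum_upd)
  qed
  hence "one = 0" unfolding zs_def by (auto simp: All_less_Suc2)
  thus False using one0 by simp
qed

lemma choice_list: "\<forall>x\<in>set xs. \<exists>y. P x y \<Longrightarrow> list_all2 P xs (map (\<lambda>x. SOME y. P x y) xs)"
  by (induction xs) (auto intro: someI_ex)

theorem mainTheorem4:
  fixes Adj :: "nat^'n^'n" and v :: nat
    and G E :: "(complex^'n) set"
  assumes reg: "regular_network Adj v"
    and G_def: "G = {x. cmat Adj *v x = of_nat v *s x}"
    and dimG: "vec.dim G > 1"
    and E_sub: "vec.subspace E" and E_G: "E \<subseteq> G"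
    and compl: "full_sync \<inter> E = {0}" "list_sum [full_sync, E] = G"
  shows
    "(\<forall>J. special_jordan (cmat Adj) (of_nat v) J \<and> J \<noteq> full_sync \<and> J \<subseteq> G \<longrightarrow>
        (\<exists>J'. vec.subspace J' \<and> J' \<subseteq> E \<and> vec.dim J' = 1 \<and> special_in E J' \<and>
              poly_closure J = poly_closure J' \<and>
              list_sum [full_sync, J] = list_sum [full_sync, J']))
   \<and> (\<forall>W. vec.subspace W \<and> W \<subseteq> E \<and> vec.dim W = 1 \<longrightarrow>
        (special_jordan (cmat Adj) (of_nat v) W \<longleftrightarrow> special_in E W))
   \<and> (\<forall>Js S. (\<forall>J\<in>set Js. special_jordan (cmat Adj) (of_nat v) J \<and> vec.dim J = 1 \<and> J \<subseteq> G)
           \<and> direct_sum (full_sync # Js) \<and> S = list_sum (full_sync # Js) \<longrightarrow>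
        (\<exists>Js'. length Js' = length Js \<and>
              (\<forall>J'\<in>set Js'. vec.subspace J' \<and> J' \<subseteq> E \<and> vec.dim J' = 1 \<and> special_in E J') \<and>
              direct_sum (full_sync # Js') \<and> S = list_sum (full_sync # Js')))"
proof -
  interpret ctx "cmat Adj" "of_nat v" G E
    by unfold_locales (use assms in auto)
  define Q where "Q = (\<lambda>J J'. Rel J J' \<and> vec.subspace J' \<and> J' \<subseteq> E \<and> vec.dim J' = 1 \<and> special_in E J'
       \<and> poly_closure J = poly_closure J')"
  have key: "\<And>J. special_jordan (cmat Adj) (of_nat v) J \<Longrightarrow> J \<noteq> full_sync \<Longrightarrow> J \<subseteq> G \<Longrightarrow> \<exists>J'. Q J J'"
  proof -
    fix J assume "special_jordan (cmat Adj) (of_nat v) J" "J \<noteq> full_sync" "J \<subseteq> G"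
    then obtain f e where fe: "f \<in> full_sync" "e \<in> E" "e \<noteq> 0" "J = vec.span {f + e}"
      "special_in E (vec.span {e})" "Rel J (vec.span {e})"
      using core1 by blast
    have "vec.span {e} \<subseteq> E" using vec.span_minimal[of "{e}" E] fe E_sub by auto
    moreover have "poly_closure J = poly_closure (vec.span {e})" using pc_shift fe by metis
    ultimately have "Q J (vec.span {e})" unfolding Q_def using fe by simp
    thus "\<exists>J'. Q J J'" by blast
  qed
  have P1: "\<forall>J. special_jordan (cmat Adj) (of_nat v) J \<and> J \<noteq> full_sync \<and> J \<subseteq> G \<longrightarrow>
        (\<exists>J'. vec.subspace J' \<and> J' \<subseteq> E \<and> vec.dim J' = 1 \<and> special_in E J' \<and>
              poly_closure J = poly_closure J' \<and>
              list_sum [full_sync, J] = list_sum [full_sync, J'])"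
  proof (intro allI impI)
    fix J assume "special_jordan (cmat Adj) (of_nat v) J \<and> J \<noteq> full_sync \<and> J \<subseteq> G"
    then obtain J' where J': "Q J J'" using key by blast
    have "list_all2 Rel [J] [J']" using J' unfolding Q_def by simp
    hence "list_sum [full_sync, J] = list_sum [full_sync, J']" using LS_eq by blast
    thus "\<exists>J'. vec.subspace J' \<and> J' \<subseteq> E \<and> vec.dim J' = 1 \<and> special_in E J' \<and>
              poly_closure J = poly_closure J' \<and>
              list_sum [full_sync, J] = list_sum [full_sync, J']" using J' unfolding Q_def by blast
  qed
  have P2: "\<forall>W. vec.subspace W \<and> W \<subseteq> E \<and> vec.dim W = 1 \<longrightarrow>
        (special_jordan (cmat Adj) (of_nat v) W \<longleftrightarrow> special_in E W)"
    using part2 by blast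
  have P3: "\<forall>Js S. (\<forall>J\<in>set Js. special_jordan (cmat Adj) (of_nat v) J \<and> vec.dim J = 1 \<and> J \<subseteq> G)
           \<and> direct_sum (full_sync # Js) \<and> S = list_sum (full_sync # Js) \<longrightarrow>
        (\<exists>Js'. length Js' = length Js \<and>
              (\<forall>J'\<in>set Js'. vec.subspace J' \<and> J' \<subseteq> E \<and> vec.dim J' = 1 \<and> special_in E J') \<and>
              direct_sum (full_sync # Js') \<and> S = list_sum (full_sync # Js'))"
  proof (intro allI impI)
    fix Js S assume h: "(\<forall>J\<in>set Js. special_jordan (cmat Adj) (of_nat v) J \<and> vec.dim J = 1 \<and> J \<subseteq> G)
           \<and> direct_sum (full_sync # Js) \<and> S = list_sum (full_sync # Js)"
    have sub: "\<forall>J\<in>set Js. vec.subspace J"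
    proof
      fix J assume "J \<in> set Js"
      hence "jordan_subspace (cmat Adj) (of_nat v) J" using h unfolding special_jordan_def by blast
      thus "vec.subspace J" unfolding jordan_subspace_def by auto
    qed
    have "\<forall>J\<in>set Js. \<exists>J'. Q J J'"
    proof
      fix J assume J: "J \<in> set Js"
      have "J \<noteq> full_sync" using notF_ds[OF _ sub J] h by blast
      thus "\<exists>J'. Q J J'" using key h J by blast
    qed
    then obtain Js' where L: "list_all2 Q Js Js'" using choice_list by blast
    have "list_all2 Rel Js Js'" using L by (rule list_all2_mono) (simp add: Q_def)
    hence ds': "direct_sum (full_sync # Js')" and S': "S = list_sum (full_sync # Js')"
      using DS_main[of Js Js'] LS_eq[of Js Js'] h by auto
    have ex: "\<forall>J'\<in>set Js'. \<exists>J. Q J J'"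
      using L by (auto simp: list_all2_conv_all_nth in_set_conv_nth) blast
    have "\<forall>J'\<in>set Js'. vec.subspace J' \<and> J' \<subseteq> E \<and> vec.dim J' = 1 \<and> special_in E J'"
    proof
      fix J' assume "J' \<in> set Js'"
      then obtain J where "Q J J'" using ex by blast
      thus "vec.subspace J' \<and> J' \<subseteq> E \<and> vec.dim J' = 1 \<and> special_in E J'" unfolding Q_def by blast
    qed
    moreover have "length Js' = length Js" using L list_all2_lengthD by metis
    ultimately show "\<exists>Js'. length Js' = length Js \<and>
              (\<forall>J'\<in>set Js'. vec.subspace J' \<and> J' \<subseteq> E \<and> vec.dim J' = 1 \<and> special_in E J') \<and>
              direct_sum (full_sync # Js') \<and> S = list_sum (full_sync # Js')" using ds' S' by blast
  qed
  show ?thesis using P1 P2 P3 by blast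
qed
end
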